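(* Let $\mathcal F$ be a Banach space with a basis $B=(e_i)_{i\in\mathbb N}$ satisfying $\sup_i\|e_i\|_{\mathcal F}<\infty$. Let $p\in(0,\infty)$ and assume $B$ has the $p$-Temlyakov property: there is $c>0$ such that for every finite $I\subset\mathbb N$ and every $(c_i)_{i\in I}\in\mathbb R^I$, $$\tfrac1c|I|^{1/p}\min_{i\in I}|c_i|\le\Big\|\sum_{i\in I}c_ie_i\Big\|_{\mathcal F}\le c|I|^{1/p}\max_{i\in I}|c_i|.$$ Let $0<q<p$ and for $M\in\mathbb N$ define $$\Sigma^q_M=\Big\{\sum_{i=1}^Mc_ie_i:\ c_i\in\mathbb R,\ \sup_{0<\lambda<\infty}\lambda\,|\{i:|c_i|\ge\lambda\}|^{1/q}\le1\Big\}.$$ With $s=\frac1q-\frac1p$, the sequence $\Sigma^q=(\Sigma^q_M)_{M\in\mathbb N}$ is $s$-encodable in $\mathcal F$ (with the metric induced by $\|\cdot\|_{\mathcal F}$).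
   Context: A finite $X\subset A$ is an $\varepsilon$-covering of $A$ if every point of $A$ is within distance $\varepsilon$ of some point of $X$. For $\gamma,h>0$, a $(\gamma,h)$-encoding of $\Sigma=(\Sigma_M)_M$ is a sequence $(\Sigma(\gamma,h)_M)_M$ such that for some $c_1,c_2>0$ and all $M$, $\Sigma(\gamma,h)_M$ is a $c_1M^{-\gamma}$-covering of $\Sigma_M$ with $\log_2|\Sigma(\gamma,h)_M|\le c_2M^{1+h}$. $\Sigma$ is $\gamma$-encodable if it admits a $(\gamma,h)$-encoding for every $h>0$. *)

theory Defs
  imports "HOL-Analysis.Analysis"
begin

definition schauder_basis :: "(nat \<Rightarrow> 'a::banach) \<Rightarrow> bool" where
  "schauder_basis e \<longleftrightarrow> (\<forall>x. \<exists>!c::nat \<Rightarrow> real. (\<lambda>i. c i *\<^sub>R e i) sums x)"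

definition temlyakov :: "real \<Rightarrow> (nat \<Rightarrow> 'a::real_normed_vector) \<Rightarrow> bool" where
  "temlyakov p e \<longleftrightarrow> (\<exists>c>0. \<forall>I::nat set. \<forall>a::nat \<Rightarrow> real. finite I \<and> I \<noteq> {} \<longrightarrow>
      (1 / c) * real (card I) powr (1 / p) * (MIN i\<in>I. \<bar>a i\<bar>) \<le> norm (\<Sum>i\<in>I. a i *\<^sub>R e i) \<and>
      norm (\<Sum>i\<in>I. a i *\<^sub>R e i) \<le> c * real (card I) powr (1 / p) * (MAX i\<in>I. \<bar>a i\<bar>))"

definition covering :: "'a::metric_space set \<Rightarrow> 'a set \<Rightarrow> real \<Rightarrow> bool" where
  "covering X A \<epsilon> \<longleftrightarrow> finite X \<and> X \<subseteq> A \<and> (\<forall>a\<in>A. \<exists>x\<in>X. dist a x \<le> \<epsilon>)"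

definition is_encoding :: "real \<Rightarrow> real \<Rightarrow> (nat \<Rightarrow> 'a::metric_space set) \<Rightarrow> (nat \<Rightarrow> 'a set) \<Rightarrow> bool" where
  "is_encoding \<gamma> h \<Sigma> S \<longleftrightarrow> (\<exists>c1>0. \<exists>c2>0. \<forall>M::nat. M \<ge> 1 \<longrightarrow>
      covering (S M) (\<Sigma> M) (c1 * real M powr (- \<gamma>)) \<and>
      log 2 (real (card (S M))) \<le> c2 * real M powr (1 + h))"

definition encodable :: "real \<Rightarrow> (nat \<Rightarrow> 'a::metric_space set) \<Rightarrow> bool" where
  "encodable \<gamma> \<Sigma> \<longleftrightarrow> (\<forall>h>0. \<exists>S. is_encoding \<gamma> h \<Sigma> S)"

text \<open>The sets Sigma^q_M: combinations of the first M basis vectors (indices 0..M-1,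
  corresponding to e_1..e_M in the paper) whose coefficient sequence has weak-l^q
  quasi-norm at most 1.\<close>
definition weak_lq_ball :: "real \<Rightarrow> (nat \<Rightarrow> 'a::real_normed_vector) \<Rightarrow> nat \<Rightarrow> 'a set" where
  "weak_lq_ball q e M = {\<Sum>i<M. c i *\<^sub>R e i | c::nat \<Rightarrow> real.
      \<forall>t>0. t * real (card {i. i < M \<and> \<bar>c i\<bar> \<ge> t}) powr (1 / q) \<le> 1}"

end

theory Submission
  imports Defs
begin

lemma cover_lemma:
  fixes A :: "'a::metric_space set" and \<phi> :: "'a \<Rightarrow> 'b"
  assumes G: "finite G" "\<phi> ` A \<subseteq> G"
    and close: "\<And>a b. a \<in> A \<Longrightarrow> b \<in> A \<Longrightarrow> \<phi> a = \<phi> b \<Longrightarrow> dist a b \<le> \<epsilon>"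
  shows "\<exists>X. covering X A \<epsilon> \<and> card X \<le> card G"
proof -
  define f where "f g = (SOME a. a \<in> A \<and> \<phi> a = g)" for g
  define X where "X = f ` (\<phi> ` A)"
  have fin: "finite (\<phi> ` A)" using G finite_subset by blast
  have f: "f (\<phi> a) \<in> A \<and> \<phi> (f (\<phi> a)) = \<phi> a" if "a \<in> A" for a
    unfolding f_def by (rule someI[of _ a]) (use that in auto)
  have "covering X A \<epsilon>"
    unfolding covering_def X_def
  proof (intro conjI ballI)
    show "finite (f ` \<phi> ` A)" using fin by simp
    show "f ` \<phi> ` A \<subseteq> A" using f by auto
  next
    fix a assume a: "a \<in> A"
    then show "\<exists>x\<in>f ` \<phi> ` A. dist a x \<le> \<epsilon>"
      using f[OF a] close[of a "f (\<phi> a)"] by (intro bexI[of _ "f (\<phi> a)"]) auto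
  qed
  moreover have "card X \<le> card G"
    unfolding X_def using card_image_le[OF fin, of f] card_mono[OF G] by linarith
  ultimately show ?thesis by blast
qed

lemma coef_bound:
  fixes c :: "nat \<Rightarrow> real" and M i :: nat
  assumes q: "q > 0" and c: "\<forall>t>0. t * real (card {i. i < M \<and> \<bar>c i\<bar> \<ge> t}) powr (1 / q) \<le> 1"
    and i: "i < M"
  shows "\<bar>c i\<bar> \<le> 1"
proof (rule ccontr)
  assume "\<not> ?thesis"
  hence t: "\<bar>c i\<bar> > 1" by simp
  have "i \<in> {j. j < M \<and> \<bar>c j\<bar> \<ge> \<bar>c i\<bar>}" using i by simp
  moreover have "finite {j. j < M \<and> \<bar>c j\<bar> \<ge> \<bar>c i\<bar>}" by simp
  ultimately have "card {j. j < M \<and> \<bar>c j\<bar> \<ge> \<bar>c i\<bar>} > 0"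
    using card_gt_0_iff by blast
  hence "card {j. j < M \<and> \<bar>c j\<bar> \<ge> \<bar>c i\<bar>} \<ge> 1" by simp
  hence "real (card {j. j < M \<and> \<bar>c j\<bar> \<ge> \<bar>c i\<bar>}) powr (1/q) \<ge> 1"
    using q by (intro ge_one_powr_ge_zero) auto
  moreover have "\<bar>c i\<bar> * real (card {j. j < M \<and> \<bar>c j\<bar> \<ge> \<bar>c i\<bar>}) powr (1 / q) \<le> 1"
    using c t by auto
  moreover have "\<bar>c i\<bar> * 1 \<le> \<bar>c i\<bar> * real (card {j. j < M \<and> \<bar>c j\<bar> \<ge> \<bar>c i\<bar>}) powr (1 / q)"
    using calculation(1) by (intro mult_left_mono) auto
  ultimately have "\<bar>c i\<bar> \<le> 1" by linarith
  with t show False by simp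
qed

lemma round_abs_le:
  assumes "\<bar>x\<bar> \<le> real K"
  shows "\<bar>round x\<bar> \<le> int K"
proof -
  have "of_int (round x) \<ge> x - 1/2" "of_int (round x) \<le> x + 1/2"
    by (rule of_int_round_ge, rule of_int_round_le)
  hence "real_of_int (round x) < real K + 1" "real_of_int (round x) > - real K - 1"
    using assms by auto
  hence "round x < int K + 1" "round x > - int K - 1" by linarith+
  thus ?thesis by linarith
qed

lemma perM:
  fixes e :: "nat \<Rightarrow> 'a::real_normed_vector"
  assumes q: "q > 0" and B: "\<forall>i. norm (e i) \<le> B" and K: "K \<ge> 1"
  shows "\<exists>X. covering X (weak_lq_ball q e M) (real M * B / real K) \<and> card X \<le> (2*K+1)^M"
proof -
  define A where "A = weak_lq_ball q e M"
  define P where "P a c \<longleftrightarrow> a = (\<Sum>i<M. c i *\<^sub>R e i) \<and>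
      (\<forall>t>0. t * real (card {i. i < M \<and> \<bar>c i\<bar> \<ge> t}) powr (1 / q) \<le> 1)" for a c
  define cf where "cf a = (SOME c. P a c)" for a
  have cfP: "P a (cf a)" if "a \<in> A" for a
  proof -
    from that obtain c where "P a c" unfolding A_def weak_lq_ball_def P_def by blast
    thus ?thesis unfolding cf_def by (rule someI[of "P a"])
  qed
  have cb: "\<bar>cf a i\<bar> \<le> 1" if "a \<in> A" "i < M" for a i
    using coef_bound[OF q _ that(2), of "cf a"] cfP[OF that(1)] unfolding P_def by blast
  define \<phi> where "\<phi> a = restrict (\<lambda>i. round (real K * cf a i)) {..<M}" for a
  define G where "G = PiE {..<M} (\<lambda>_. {- int K..int K})"
  have finG: "finite G" unfolding G_def by (simp add: finite_PiE)
  have cardG: "card G = (2*K+1)^M"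
  proof -
    have "card {- int K..int K} = 2*K+1" by simp
    thus ?thesis unfolding G_def by (simp add: card_PiE)
  qed
  have sub: "\<phi> ` A \<subseteq> G"
  proof
    fix g assume "g \<in> \<phi> ` A"
    then obtain a where a: "a \<in> A" "g = \<phi> a" by blast
    have "\<bar>round (real K * cf a i)\<bar> \<le> int K" if "i < M" for i
    proof (rule round_abs_le)
      have "\<bar>real K * cf a i\<bar> = real K * \<bar>cf a i\<bar>" by (simp add: abs_mult)
      also have "\<dots> \<le> real K * 1" using cb[OF a(1) that] by (intro mult_left_mono) auto
      finally show "\<bar>real K * cf a i\<bar> \<le> real K" by simp
    qed
    thus "g \<in> G" unfolding a(2) \<phi>_def G_def by (force simp: PiE_iff abs_le_iff)
  qed
  have Bnn: "B \<ge> 0" using B norm_ge_zero order_trans by blast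
  have close: "dist a b \<le> real M * B / real K" if ab: "a \<in> A" "b \<in> A" "\<phi> a = \<phi> b" for a b
  proof -
    have d: "\<bar>cf a i - cf b i\<bar> \<le> 1 / real K" if i: "i < M" for i
    proof -
      have "round (real K * cf a i) = round (real K * cf b i)"
        using fun_cong[OF ab(3), of i] i unfolding \<phi>_def by simp
      hence "\<bar>real K * cf a i - real K * cf b i\<bar> < 1" by (rule round_eq_imp_diff_1)
      hence "real K * \<bar>cf a i - cf b i\<bar> \<le> 1"
        by (simp add: abs_mult right_diff_distrib[symmetric])
      thus ?thesis using K by (simp add: field_simps)
    qed
    have "a - b = (\<Sum>i<M. (cf a i - cf b i) *\<^sub>R e i)"
      using cfP[OF ab(1)] cfP[OF ab(2)] unfolding P_def
      by (simp add: sum_subtractf scaleR_diff_left)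
    hence "dist a b = norm (\<Sum>i<M. (cf a i - cf b i) *\<^sub>R e i)" by (simp add: dist_norm)
    also have "\<dots> \<le> (\<Sum>i<M. norm ((cf a i - cf b i) *\<^sub>R e i))" by (rule norm_sum)
    also have "\<dots> \<le> (\<Sum>i<M. (1 / real K) * B)"
    proof (rule sum_mono)
      fix i assume "i \<in> {..<M}"
      thus "norm ((cf a i - cf b i) *\<^sub>R e i) \<le> (1 / real K) * B"
        using mult_mono[OF d[of i] B[rule_format, of i]] Bnn by simp
    qed
    also have "\<dots> = real M * B / real K" by simp
    finally show ?thesis .
  qed
  from cover_lemma[OF finG sub close] show ?thesis unfolding A_def cardG by blast
qed

lemma covering_mono: "covering X A r \<Longrightarrow> r \<le> r' \<Longrightarrow> covering X A r'"
  unfolding covering_def by force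

lemma log_part:
  fixes B s h :: real and M K :: nat
  assumes B: "B \<ge> 1" and s: "s > 0" and h: "h > 0" and M: "M \<ge> 1"
    and K: "real K \<le> B * real M powr (s+1) + 1"
  shows "real M * log 2 (real (2*K+1)) \<le>
     (log 2 (5*B) + (s+1) / (h * ln 2) + 1) * real M powr (1 + h)"
proof -
  have Mp: "real M powr (s+1) \<ge> 1" using M s by (intro ge_one_powr_ge_zero) auto
  have "real (2*K+1) \<le> 2 * (B * real M powr (s+1) + 1) + 1" using K by simp
  also have "\<dots> \<le> 5 * B * real M powr (s+1)"
  proof -
    have "1 * 1 \<le> B * real M powr (s+1)" using B Mp by (intro mult_mono) auto
    thus ?thesis by (simp add: algebra_simps)
  qed
  finally have k5: "real (2*K+1) \<le> 5 * B * real M powr (s+1)" .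
  have "log 2 (real (2*K+1)) \<le> log 2 (5 * B * real M powr (s+1))"
    using k5 by (intro log_mono) auto
  also have "\<dots> = log 2 (5*B) + (s+1) * log 2 (real M)"
    using B M by (simp add: log_mult log_powr)
  finally have l1: "log 2 (real (2*K+1)) \<le> log 2 (5*B) + (s+1) * log 2 (real M)" .
  have "ln (real M) \<le> real M powr h / h" using M h by (intro ln_powr_bound) auto
  hence l2: "log 2 (real M) \<le> real M powr h / (h * ln 2)"
    unfolding log_def by (simp add: divide_right_mono field_simps)
  have L0: "log 2 (5*B) \<ge> 0" using B by simp
  have Mh: "real M powr (1+h) = real M * real M powr h" using M by (simp add: powr_add)
  have Mh1: "real M powr h \<ge> 1" using M h by (intro ge_one_powr_ge_zero) auto
  have "real M * log 2 (real (2*K+1)) \<le> real M * (log 2 (5*B) + (s+1) * (real M powr h / (h * ln 2)))"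
  proof (rule mult_left_mono)
    have "(s+1) * log 2 (real M) \<le> (s+1) * (real M powr h / (h * ln 2))"
      using l2 s by (intro mult_left_mono) auto
    thus "log 2 (real (2*K+1)) \<le> log 2 (5*B) + (s+1) * (real M powr h / (h * ln 2))"
      using l1 by linarith
  qed simp
  also have "\<dots> = real M * log 2 (5*B) + (s+1) / (h * ln 2) * real M powr (1+h)"
    unfolding Mh by (simp add: algebra_simps)
  also have "\<dots> \<le> log 2 (5*B) * real M powr (1+h) + (s+1) / (h * ln 2) * real M powr (1+h)"
  proof -
    have "real M \<le> real M powr (1+h)" unfolding Mh using Mh1 M by simp
    hence "real M * log 2 (5*B) \<le> log 2 (5*B) * real M powr (1+h)"
      using mult_right_mono[OF _ L0] by (simp add: mult.commute)
    thus ?thesis by simp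
  qed
  also have "\<dots> \<le> (log 2 (5*B) + (s+1) / (h * ln 2) + 1) * real M powr (1 + h)"
    by (simp add: algebra_simps)
  finally show ?thesis .
qed

theorem mainTheorem14:
  fixes e :: "nat \<Rightarrow> 'a::banach" and p q :: real
  assumes "schauder_basis e"
    and "bdd_above (range (\<lambda>i. norm (e i)))"
    and "0 < p" and "temlyakov p e"
    and "0 < q" and "q < p"
  shows "encodable (1 / q - 1 / p) (weak_lq_ball q e)"
proof -
  obtain B0 where B0: "\<forall>i. norm (e i) \<le> B0" using assms(2) unfolding bdd_above_def by auto
  define B where "B = max 1 B0"
  have B: "\<forall>i. norm (e i) \<le> B" "B \<ge> 1" using B0 unfolding B_def by (auto intro: le_max_iff_disj[THEN iffD2])
  define s where "s = 1 / q - 1 / p"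
  have s: "s > 0" unfolding s_def using assms(3,5,6) by (simp add: frac_less2)
  have all: "\<forall>h>0. \<exists>S. is_encoding s h (weak_lq_ball q e) S"
  proof (intro allI impI)
    fix h :: real assume h: "h > 0"
    define K where "K M = nat \<lceil>B * real M powr (s+1)\<rceil>" for M :: nat
    define S where "S M = (SOME X. covering X (weak_lq_ball q e M) (real M powr (-s)) \<and>
         card X \<le> (2 * K M + 1) ^ M)" for M
    define c2 where "c2 = log 2 (5*B) + (s+1) / (h * ln 2) + 1"
    have c2: "c2 > 0" 
    proof -
      have "log 2 (5*B) \<ge> 0" using B by simp
      moreover have "(s+1) / (h * ln 2) > 0" using s h by simp
      ultimately show ?thesis unfolding c2_def by linarith
    qed
    have main: "covering (S M) (weak_lq_ball q e M) (1 * real M powr (-s)) \<and>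
       log 2 (real (card (S M))) \<le> c2 * real M powr (1 + h)" if M: "M \<ge> 1" for M
    proof -
      have Mp: "real M powr (s+1) \<ge> 1" using M s by (intro ge_one_powr_ge_zero) auto
      have Kge: "real (K M) \<ge> B * real M powr (s+1)" unfolding K_def by linarith
      have x1: "B * real M powr (s+1) \<ge> 1"
      proof -
        have "1 * 1 \<le> B * real M powr (s+1)" using B Mp by (intro mult_mono) auto
        thus ?thesis by simp
      qed
      have Kle: "real (K M) \<le> B * real M powr (s+1) + 1"
      proof -
        have c0: "\<lceil>B * real M powr (s+1)\<rceil> \<ge> 0" using x1 by linarith
        have "real_of_int \<lceil>B * real M powr (s+1)\<rceil> < B * real M powr (s+1) + 1"
          using ceiling_correct[of "B * real M powr (s+1)"] by linarith
        thus ?thesis unfolding K_def using c0 by simp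
      qed
      have K1: "K M \<ge> 1" using Kge x1 by linarith
      have rad: "real M * B / real (K M) \<le> real M powr (-s)"
      proof -
        have Mps: "real M powr (s+1) = real M powr s * real M" using M by (simp add: powr_add)
        have pos: "real M powr s > 0" using M by simp
        have "real M * B / real (K M) \<le> real M * B / (B * real M powr (s+1))"
          using Kge B M Mp x1 by (intro divide_left_mono) (auto intro!: mult_pos_pos)
        also have "\<dots> = real M powr (-s)" unfolding Mps using B M pos
          by (simp add: powr_minus field_simps)
        finally show ?thesis .
      qed
      obtain X where X: "covering X (weak_lq_ball q e M) (real M * B / real (K M))"
          "card X \<le> (2 * K M + 1) ^ M"
        using perM[OF assms(5) B(1) K1] by blast
      have ex: "\<exists>X. covering X (weak_lq_ball q e M) (real M powr (-s)) \<and> card X \<le> (2 * K M + 1) ^ M"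
        using X covering_mono[OF X(1) rad] by blast
      have SM: "covering (S M) (weak_lq_ball q e M) (real M powr (-s)) \<and> card (S M) \<le> (2 * K M + 1) ^ M"
        unfolding S_def using someI_ex[OF ex] .
      have "log 2 (real (card (S M))) \<le> c2 * real M powr (1 + h)"
      proof (cases "card (S M) = 0")
        case True thus ?thesis using c2 by (simp add: log_def)
      next
        case False
        have "log 2 (real (card (S M))) \<le> log 2 (real ((2 * K M + 1) ^ M))"
        proof (rule log_mono)
          show "real (card (S M)) \<le> real ((2 * K M + 1) ^ M)"
            using SM by (simp only: of_nat_le_iff)
        qed (use False in auto)
        also have "\<dots> = real M * log 2 (real (2 * K M + 1))"
          by (simp add: log_nat_power del: of_nat_add of_nat_mult)
        also have "\<dots> \<le> c2 * real M powr (1 + h)"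
          unfolding c2_def by (rule log_part[OF B(2) s h M Kle])
        finally show ?thesis .
      qed
      with SM show ?thesis by simp
    qed
    show "\<exists>S. is_encoding s h (weak_lq_ball q e) S"
      unfolding is_encoding_def using main c2 by (intro exI[of _ S] exI[of _ 1] exI[of _ c2]) auto
  qed
  thus ?thesis unfolding encodable_def s_def .
qed

end
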